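(* Fix integers $q\ge 1$ and $k\ge 4$, and let $G(q,k)$ be the graph on vertex set $\{v_0,v_1,\ldots,v_{kq}\}$ in which, with all indices taken modulo $kq+1$, the neighbourhood of $v_i$ is $$\{v_{i-1},v_{i+1}\}\cup\{v_{i+kj+m} : m=2,3,\ldots,k-1,\ j=0,1,\ldots,q-1\}.$$ Then $G(q,k)$ is $(K_3+P_1)$-free.
   Context: $K_3+P_1$ denotes the disjoint union of a triangle and a single isolated vertex. A graph is $H$-free if it contains no induced subgraph isomorphic to $H$. *)

theory Defs
  imports Main
begin

definition K3P1_free :: "'a set \<Rightarrow> ('a \<Rightarrow> 'a \<Rightarrow> bool) \<Rightarrow> bool" where
  "K3P1_free V E \<longleftrightarrow>
     \<not> (\<exists>a\<in>V. \<exists>b\<in>V. \<exists>c\<in>V. \<exists>d\<in>V. distinct [a, b, c, d] \<and>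
          E a b \<and> E b c \<and> E a c \<and> \<not> E a d \<and> \<not> E b d \<and> \<not> E c d)"

definition G_vertices :: "int \<Rightarrow> int \<Rightarrow> int set" where
  "G_vertices q k = {0..k*q}"

definition G_adj :: "int \<Rightarrow> int \<Rightarrow> int \<Rightarrow> int \<Rightarrow> bool" where
  "G_adj q k u v \<longleftrightarrow>
     (let n = k*q + 1 in
        v mod n = (u - 1) mod n \<or> v mod n = (u + 1) mod n \<or>
        (\<exists>m\<in>{2..k-1}. \<exists>j\<in>{0..q-1}. v mod n = (u + k*j + m) mod n))"

end

theory Submission
  imports Defs
begin

lemma nomul: "(k::int) > 0 \<Longrightarrow> k*e = c \<Longrightarrow> 0 < c \<Longrightarrow> c < k \<Longrightarrow> False"
proof -
  assume h: "k > 0" "k*e = c" "0 < c" "c < k"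
  show False
  proof (cases "e \<le> 0")
    case True
    then have "k*e \<le> 0" using h(1) by (simp add: mult_nonneg_nonpos)
    then show ?thesis using h by simp
  next
    case False
    then have "k*e \<ge> k*1" using h(1) by (intro mult_left_mono) auto
    then show ?thesis using h by simp
  qed
qed

lemma dvd_range: "(n::int) > 0 \<Longrightarrow> n dvd z \<Longrightarrow> -2*n < z \<Longrightarrow> z < n \<Longrightarrow> z = 0 \<or> z = -n"
proof -
  assume h: "n > 0" "n dvd z" "-2*n < z" "z < n"
  then obtain c where c: "z = n*c" by (auto simp: dvd_def)
  have "c \<le> 0"
  proof (rule ccontr)
    assume "\<not> c \<le> 0"
    then have "n*c \<ge> n*1" using h(1) by (intro mult_left_mono) auto
    then have "n*c \<ge> n" by simp
    then show False using h c by linarith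
  qed
  moreover have "c \<ge> -1"
  proof (rule ccontr)
    assume "\<not> c \<ge> -1"
    then have "n*c \<le> n*(-2)" using h(1) by (intro mult_left_mono) auto
    then show False using h c by simp
  qed
  ultimately have "c = 0 \<or> c = -1" by auto
  then show ?thesis using c by auto
qed

lemma adj_dvd: "G_adj q k u v \<longleftrightarrow> ((k*q+1) dvd (v-u+1) \<or> (k*q+1) dvd (v-u-1) \<or>
   (\<exists>m\<in>{2..k-1}. \<exists>j\<in>{0..q-1}. (k*q+1) dvd (v-u-k*j-m)))"
  unfolding G_adj_def Let_def mod_eq_dvd_iff
  by (simp add: algebra_simps diff_diff_eq)

lemma nonadj_form:
  fixes q k x d :: int
  assumes q: "q \<ge> 1" and k: "k \<ge> 4" and x: "x \<in> G_vertices q k" and d: "d \<in> G_vertices q k"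
    and xd: "x \<noteq> d" and na: "\<not> G_adj q k x d"
  shows "\<exists>i r. 1 \<le> i \<and> i \<le> q-1 \<and> (r = 0 \<or> r = 1) \<and> (k*q+1) dvd (d - x - k*i - r)"
proof -
  define n where "n = k*q+1"
  have kq: "k*q \<ge> k" using q k by (metis mult.comm_neutral mult_left_mono order_trans linorder_linear dual_order.trans zero_le_numeral mult_le_cancel_left1 le_numeral_extra(4)) 
  have npos: "n > 0" using kq k n_def by simp
  define t where "t = (d - x) mod n"
  have t0: "0 \<le> t" "t < n" using npos t_def by auto
  have tdvd: "n dvd (d - x - t)" unfolding t_def by (simp add: mod_eq_dvd_iff[symmetric] )
  have xr: "0 \<le> x" "x \<le> k*q" and dr: "0 \<le> d" "d \<le> k*q" using x d by (auto simp: G_vertices_def)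
  have "t \<noteq> 0"
  proof
    assume "t = 0"
    then have "n dvd (d - x)" using tdvd by simp
    then have "d - x = 0 \<or> d - x = -n" using dvd_range[OF npos, of "d-x"] xr dr n_def by auto
    then show False using xd xr dr n_def by auto
  qed
  have "t \<noteq> 1"
  proof
    assume "t = 1"
    then have "n dvd (d - x - 1)" using tdvd by simp
    then show False using na unfolding adj_dvd n_def by blast
  qed
  have "t \<noteq> k*q"
  proof
    assume "t = k*q"
    then have "n dvd (d - x - k*q)" using tdvd by simp
    then have "n dvd (d - x - k*q + n)" by simp
    moreover have "d - x - k*q + n = d - x + 1" by (simp add: n_def)
    ultimately have "n dvd (d - x + 1)" by metis
    then show False using na unfolding adj_dvd n_def by blast
  qed
  define i where "i = t div k"
  define r where "r = t mod k"
  have tir: "t = k*i + r" using i_def r_def by simp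
  have r0: "0 \<le> r" "r < k" using r_def k by auto
  have tle: "t \<le> k*q" using t0 n_def by simp
  have "\<not> r \<ge> 2"
  proof
    assume r2: "r \<ge> 2"
    have "i \<le> q - 1"
    proof (rule ccontr)
      assume "\<not> i \<le> q-1"
      then have "k*i \<ge> k*q" using k by (intro mult_left_mono) auto
      then show False using tir tle r2 by simp
    qed
    moreover have "i \<ge> 0" using i_def t0 k by (simp add: pos_imp_zdiv_nonneg_iff)
    moreover have "n dvd (d - x - k*i - r)" using tdvd tir by (simp add: algebra_simps)
    ultimately show False using na adj_dvd n_def r2 r0
      by (metis atLeastAtMost_iff diff_diff_eq2 diff_le_eq le_diff_eq zle_diff1_eq add_le_cancel_left
          zless_imp_add1_zle r_def)
  qed
  then have r01: "r = 0 \<or> r = 1" using r0 by auto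
  have "i \<ge> 1"
  proof (rule ccontr)
    assume "\<not> i \<ge> 1"
    then have "k*i \<le> k*0" using k by (intro mult_left_mono) auto
    then show False using tir r01 \<open>t \<noteq> 0\<close> \<open>t \<noteq> 1\<close> t0 by auto
  qed
  moreover have "i \<le> q - 1"
  proof (rule ccontr)
    assume "\<not> i \<le> q-1"
    then have "k*i \<ge> k*q" using k by (intro mult_left_mono) auto
    then show False using tir tle r01 \<open>t \<noteq> k*q\<close> by auto
  qed
  moreover have "n dvd (d - x - k*i - r)" using tdvd tir by (simp add: algebra_simps)
  ultimately show ?thesis using r01 n_def by blast
qed

lemma pair_nonadj:
  fixes q k x y d ix iy r :: int
  assumes q: "q \<ge> 1" and k: "k \<ge> 4"
    and ix: "1 \<le> ix" "ix \<le> q-1" and iy: "1 \<le> iy" "iy \<le> q-1"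
    and hx: "(k*q+1) dvd (d - x - k*ix - r)" and hy: "(k*q+1) dvd (d - y - k*iy - r)"
  shows "\<not> G_adj q k x y"
proof
  assume adj: "G_adj q k x y"
  define n where "n = k*q+1"
  define e where "e = ix - iy"
  have kpos: "k > 0" using k by simp
  have kq: "k*q \<ge> k*1" using q k by (intro mult_left_mono) auto
  have npos: "n > 0" using kq k n_def by simp
  have "n dvd ((d - y - k*iy - r) - (d - x - k*ix - r))" unfolding n_def using hy hx by (rule dvd_diff)
  moreover have "(d - y - k*iy - r) - (d - x - k*ix - r) = - ((y - x) - k*e)" by (simp add: e_def algebra_simps)
  ultimately have "n dvd (- ((y - x) - k*e))" by metis
  then have D: "n dvd ((y - x) - k*e)" by (simp only: dvd_minus_iff)
  have e1: "k*e \<le> k*(q-2)" using ix iy k e_def by (intro mult_left_mono) auto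
  have e2: "k*(-e) \<le> k*(q-2)" using ix iy k e_def by (intro mult_left_mono) auto
  have kq2: "k*(q-2) = k*q - 2*k" by (simp add: algebra_simps)
  have kme: "k*(-e) = - (k*e)" by simp
  from adj consider (a) "n dvd (y-x+1)" | (b) "n dvd (y-x-1)"
    | (c) m j where "m \<in> {2..k-1}" "j \<in> {0..q-1}" "n dvd (y-x-k*j-m)"
    unfolding adj_dvd n_def by blast
  then show False
  proof cases
    case a
    have "n dvd ((y-x+1) - ((y - x) - k*e))" using a D by (rule dvd_diff)
    then have "n dvd (k*e + 1)" by (simp add: add.commute)
    then have "k*e + 1 = 0 \<or> k*e + 1 = -n" by (rule dvd_range[OF npos]) (use e1 e2 kq2 kme n_def k in linarith)+
    then show False
    proof
      assume "k*e + 1 = 0"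
      then have "k*(-e) = 1" by simp
      then show False using nomul[OF kpos] k by fastforce
    qed (use e2 kq2 kme n_def k in linarith)
  next
    case b
    have "n dvd ((y-x-1) - ((y - x) - k*e))" using b D by (rule dvd_diff)
    then have "n dvd (k*e - 1)" by (simp add: algebra_simps)
    then have "k*e - 1 = 0 \<or> k*e - 1 = -n" by (rule dvd_range[OF npos]) (use e1 e2 kq2 kme n_def k in linarith)+
    then show False
    proof
      assume "k*e - 1 = 0"
      then have "k*e = 1" by simp
      then show False using nomul[OF kpos] k by fastforce
    qed (use e2 kq2 kme n_def k in linarith)
  next
    case (c m j)
    have "n dvd ((y-x-k*j-m) - ((y - x) - k*e))" using c(3) D by (rule dvd_diff)
    moreover have "(y-x-k*j-m) - ((y - x) - k*e) = k*e - k*j - m" by simp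
    ultimately have z: "n dvd (k*e - k*j - m)" by simp
    have j1: "k*j \<le> k*(q-1)" using c(2) k by (intro mult_left_mono) auto
    have j2: "k*j \<ge> 0" using c(2) k by simp
    have kq1: "k*(q-1) = k*q - k" by (simp add: algebra_simps)
    have m1: "2 \<le> m" "m \<le> k-1" using c(1) by auto
    have "k*e - k*j - m = 0 \<or> k*e - k*j - m = -n"
      by (rule dvd_range[OF npos z]) (use e1 e2 kq2 kme kq1 j1 j2 m1 n_def k in linarith)+
    then show False
    proof
      assume "k*e - k*j - m = 0"
      then have "k*(e-j) = m" by (simp add: algebra_simps)
      then show False by (rule nomul[OF kpos]) (use m1 in linarith)+
    next
      assume "k*e - k*j - m = -n"
      then have "k*(e-j+q) = m - 1" by (simp add: algebra_simps n_def)
      then show False by (rule nomul[OF kpos]) (use m1 in linarith)+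
    qed
  qed
qed

theorem lemma2p4:
  fixes q k :: int
  assumes "q \<ge> 1" and "k \<ge> 4"
  shows "K3P1_free (G_vertices q k) (G_adj q k)"
  unfolding K3P1_free_def
proof
  assume "\<exists>a\<in>G_vertices q k. \<exists>b\<in>G_vertices q k. \<exists>c\<in>G_vertices q k. \<exists>d\<in>G_vertices q k.
     distinct [a, b, c, d] \<and> G_adj q k a b \<and> G_adj q k b c \<and> G_adj q k a c \<and>
     \<not> G_adj q k a d \<and> \<not> G_adj q k b d \<and> \<not> G_adj q k c d"
  then obtain a b c d where V: "a \<in> G_vertices q k" "b \<in> G_vertices q k" "c \<in> G_vertices q k" "d \<in> G_vertices q k"
    and dist: "distinct [a, b, c, d]" and ab: "G_adj q k a b" and bc: "G_adj q k b c" and ac: "G_adj q k a c"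
    and na: "\<not> G_adj q k a d" and nb: "\<not> G_adj q k b d" and nc: "\<not> G_adj q k c d" by blast
  obtain ia ra where A: "1 \<le> ia" "ia \<le> q-1" "ra = 0 \<or> ra = 1" "(k*q+1) dvd (d - a - k*ia - ra)"
    using nonadj_form[OF assms V(1) V(4) _ na] dist by auto
  obtain ib rb where B: "1 \<le> ib" "ib \<le> q-1" "rb = 0 \<or> rb = 1" "(k*q+1) dvd (d - b - k*ib - rb)"
    using nonadj_form[OF assms V(2) V(4) _ nb] dist by auto
  obtain ic rc where C: "1 \<le> ic" "ic \<le> q-1" "rc = 0 \<or> rc = 1" "(k*q+1) dvd (d - c - k*ic - rc)"
    using nonadj_form[OF assms V(3) V(4) _ nc] dist by auto
  have "ra = rb \<or> rb = rc \<or> ra = rc" using A(3) B(3) C(3) by auto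
  then show False
  proof (elim disjE)
    assume "ra = rb"
    then show False using pair_nonadj[OF assms A(1,2) B(1,2) A(4)] B(4) ab by simp
  next
    assume "rb = rc"
    then show False using pair_nonadj[OF assms B(1,2) C(1,2) B(4)] C(4) bc by simp
  next
    assume "ra = rc"
    then show False using pair_nonadj[OF assms A(1,2) C(1,2) A(4)] C(4) ac by simp
  qed
qed

end
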